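(* Let $M=B\circ S$ with $S$ subsampling without replacement with batch size $q$, let the dataset relation be substitution $\simeq_\Delta$ and the batch relation be insertion/removal $\simeq_\pm$ with induced distance $d_\pm$. Then for every $\alpha>1$ and all datasets $x\simeq_\Delta x'$ of size $N$, $$\Lambda_\alpha(m_x\|m_{x'})\le\max_{y^{(1)}_1,y^{(1)}_2,y^{(2)}_1,y^{(2)}_2\in\mathbb Y}\Lambda_\alpha\big((1-w)b_{y^{(1)}_1}+w\,b_{y^{(1)}_2}\ \big\|\ (1-w)b_{y^{(2)}_1}+w\,b_{y^{(2)}_2}\big)$$ subject to $y^{(1)}_1=y^{(2)}_1$, $d_\pm(y^{(1)}_1,y^{(1)}_2)\le2$, $d_\pm(y^{(1)}_1,y^{(2)}_2)\le2$, $d_\pm(y^{(1)}_2,y^{(2)}_2)\le2$, where $w=q/N$.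
   Context: Finite set $\mathbb A$, datasets are subsets of $\mathbb A$ with more than $q$ elements; the batch space $\mathbb Y$ consists of subsets of size $q$ (of datasets). Subsampling without replacement: $s_x(y)=\binom{|x|}{q}^{-1}$ for $y\subseteq x$, $|y|=q$. $B$ assigns a density $b_y$ on $\mathbb R^D$ to each batch; $m_x=\sum_y b_y s_x(y)$. $x\simeq_\Delta x'$ iff $x'=(x\setminus\{a\})\cup\{a'\}$ with $a\in x$, $a'\notin x$. $y\simeq_\pm y'$ iff one is obtained from the other by inserting or removing one element; $d_\pm$ is the induced distance (length of shortest chain of neighbors, measured through arbitrary finite subsets of $\mathbb A$). $\Lambda_\alpha(p\|q)=\int p^\alpha q^{1-\alpha}dz$. *)

theory Defs
  imports "HOL-Analysis.Analysis"
begin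

definition batches :: "'a set \<Rightarrow> nat \<Rightarrow> 'a set set" where
  "batches A q = {y. y \<subseteq> A \<and> card y = q}"

definition subsample_prob :: "nat \<Rightarrow> 'a set \<Rightarrow> 'a set \<Rightarrow> real" where
  "subsample_prob q x y = (if y \<subseteq> x \<and> card y = q then 1 / real (card x choose q) else 0)"

definition mech_density ::
  "'a set \<Rightarrow> nat \<Rightarrow> ('a set \<Rightarrow> 'd \<Rightarrow> real) \<Rightarrow> 'a set \<Rightarrow> 'd \<Rightarrow> real" where
  "mech_density A q b x z = (\<Sum>y\<in>batches A q. b y z * subsample_prob q x y)"

definition subst_rel :: "'a set \<Rightarrow> 'a set \<Rightarrow> 'a set \<Rightarrow> bool" where
  "subst_rel A x x' \<longleftrightarrow> (\<exists>a a'. a \<in> x \<and> a' \<in> A \<and> a' \<notin> x \<and> x' = (x - {a}) \<union> {a'})"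

definition ins_rem_rel :: "'a set \<Rightarrow> 'a set \<Rightarrow> 'a set \<Rightarrow> bool" where
  "ins_rem_rel A y y' \<longleftrightarrow> y \<subseteq> A \<and> y' \<subseteq> A \<and>
     (\<exists>a\<in>A. (a \<notin> y \<and> y' = insert a y) \<or> (a \<in> y \<and> y' = y - {a}))"

definition d_pm :: "'a set \<Rightarrow> 'a set \<Rightarrow> 'a set \<Rightarrow> nat" where
  "d_pm A y y' = (LEAST n. (ins_rem_rel A ^^ n) y y')"

definition renyi_lambda :: "real \<Rightarrow> ('d::euclidean_space \<Rightarrow> real) \<Rightarrow> ('d \<Rightarrow> real) \<Rightarrow> ennreal" where
  "renyi_lambda \<alpha> p q = (\<integral>\<^sup>+ z. (if p z = 0 then 0 else if q z = 0 then \<infinity>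
       else ennreal (p z powr \<alpha> * q z powr (1 - \<alpha>))) \<partial>lborel)"

definition is_density :: "('d::euclidean_space \<Rightarrow> real) \<Rightarrow> bool" where
  "is_density p \<longleftrightarrow> p \<in> borel_measurable lborel \<and> (\<forall>z. 0 \<le> p z) \<and>
     (\<integral>\<^sup>+ z. ennreal (p z) \<partial>lborel) = 1"

end

theory Submission
  imports Defs
begin

lemma pq_form: "(q::real) > 0 \<Longrightarrow> p \<ge> 0 \<Longrightarrow> p powr a * q powr (1-a) = q * (p/q) powr a"
  by (simp add: powr_divide powr_diff)

lemma real_sub:
  fixes p1 p2 q1 q2 a :: real
  assumes "a > 1" "p1 > 0" "p2 > 0" "q1 > 0" "q2 > 0"
  shows "(p1+p2) powr a * (q1+q2) powr (1-a) \<le> p1 powr a * q1 powr (1-a) + p2 powr a * q2 powr (1-a)"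
proof -
  define Q where "Q = q1 + q2"
  define t where "t = q2 / Q"
  have Q: "Q > 0" using assms by (simp add: Q_def)
  have t: "0 \<le> t" "t \<le> 1" using assms Q by (auto simp: t_def Q_def)
  have 1: "1 - t = q1 / Q" using Q by (simp add: t_def Q_def field_simps)
  have cv: "convex_on {0<..} (\<lambda>x::real. x powr a)" by (rule powr_convex) (use assms in simp)
  have "((1 - t) *\<^sub>R (p1/q1) + t *\<^sub>R (p2/q2)) powr a \<le> (1-t) * (p1/q1) powr a + t * (p2/q2) powr a"
    using convex_onD[OF cv, of t "p1/q1" "p2/q2"] t assms by simp
  moreover have "(1 - t) *\<^sub>R (p1/q1) + t *\<^sub>R (p2/q2) = (p1+p2)/Q"
    unfolding 1 using assms Q by (simp add: t_def field_simps)
  ultimately have "Q * ((p1+p2)/Q) powr a \<le> Q * ((1-t) * (p1/q1) powr a + t * (p2/q2) powr a)"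
    using Q by (intro mult_left_mono) auto
  also have "\<dots> = q1 * (p1/q1) powr a + q2 * (p2/q2) powr a"
    unfolding 1 using Q by (simp add: t_def field_simps)
  finally show ?thesis
    using pq_form[of Q "p1+p2" a] pq_form[of q1 p1 a] pq_form[of q2 p2 a] assms Q
    by (simp add: Q_def)
qed

definition gf :: "real \<Rightarrow> real \<Rightarrow> real \<Rightarrow> ennreal" where
  "gf a p q = (if p = 0 then 0 else if q = 0 then \<infinity> else ennreal (p powr a * q powr (1-a)))"

lemma gf_sub2:
  fixes p1 p2 q1 q2 a :: real
  assumes "a > 1" "p1 \<ge> 0" "p2 \<ge> 0" "q1 \<ge> 0" "q2 \<ge> 0"
  shows "gf a (p1+p2) (q1+q2) \<le> gf a p1 q1 + gf a p2 q2"
proof -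
  have mono: "(p) powr a * (q+r) powr (1-a) \<le> p powr a * q powr (1-a)" if "q > 0" "r \<ge> 0" "p \<ge> 0" for p q r :: real
  proof -
    have "(q+r) powr (1-a) \<le> q powr (1-a)"
      using that assms by (intro powr_mono2') auto
    thus ?thesis by (intro mult_left_mono) auto
  qed
  show ?thesis
  proof (cases "p1 + p2 = 0")
    case True thus ?thesis by (simp add: gf_def)
  next
    case F: False
    show ?thesis
    proof (cases "(p1 > 0 \<and> q1 = 0) \<or> (p2 > 0 \<and> q2 = 0)")
      case True thus ?thesis by (auto simp: gf_def)
    next
      case False
      hence qpos: "q1 + q2 > 0" using F assms by auto
      show ?thesis
      proof (cases "p1 = 0")
        case True
        hence "q2 > 0" "p2 > 0" using False F assms by auto
        thus ?thesis using True qpos mono[of q2 q1 p2] assms by (auto simp: gf_def add.commute)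
      next
        case p1: False
        show ?thesis
        proof (cases "p2 = 0")
          case True
          hence "q1 > 0" "p1 > 0" using False p1 assms by auto
          thus ?thesis using True qpos mono[of q1 q2 p1] assms by (auto simp: gf_def)
        next
          case p2: False
          hence pp: "q1 > 0" "p1 > 0" "q2 > 0" "p2 > 0" using False p1 assms by auto
          have "gf a (p1+p2) (q1+q2) = ennreal ((p1+p2) powr a * (q1+q2) powr (1-a))"
            using pp by (simp add: gf_def)
          also have "\<dots> \<le> ennreal (p1 powr a * q1 powr (1-a) + p2 powr a * q2 powr (1-a))"
            using real_sub[OF assms(1) pp(2,4,1,3)] by (rule ennreal_leI)
          also have "\<dots> = gf a p1 q1 + gf a p2 q2"
            using pp by (simp add: gf_def ennreal_plus)
          finally show ?thesis .
        qed
      qed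
    qed
  qed
qed

lemma gf_sub:
  assumes "a > 1" "finite I" "\<And>i. i \<in> I \<Longrightarrow> p i \<ge> 0" "\<And>i. i \<in> I \<Longrightarrow> q i \<ge> 0"
  shows "gf a (\<Sum>i\<in>I. p i) (\<Sum>i\<in>I. q i) \<le> (\<Sum>i\<in>I. gf a (p i) (q i))"
  using assms(2-4)
proof (induction I rule: finite_induct)
  case empty thus ?case by (simp add: gf_def)
next
  case (insert i I)
  have "gf a (\<Sum>i\<in>insert i I. p i) (\<Sum>i\<in>insert i I. q i) = gf a (p i + (\<Sum>i\<in>I. p i)) (q i + (\<Sum>i\<in>I. q i))"
    using insert by simp
  also have "\<dots> \<le> gf a (p i) (q i) + gf a (\<Sum>i\<in>I. p i) (\<Sum>i\<in>I. q i)"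
    using insert by (intro gf_sub2 assms(1) sum_nonneg) auto
  also have "\<dots> \<le> gf a (p i) (q i) + (\<Sum>i\<in>I. gf a (p i) (q i))"
    using insert by (intro add_left_mono) auto
  finally show ?case using insert by simp
qed

lemma gf_hom:
  assumes "c > 0" shows "gf a (c * p) (c * q) = ennreal c * gf a p q"
proof -
  have "(c*p) powr a * (c*q) powr (1-a) = c * (p powr a * q powr (1-a))" if "p \<noteq> 0" "q \<noteq> 0"
  proof -
    have "(c*p) powr a * (c*q) powr (1-a) = (c powr a * c powr (1-a)) * (p powr a * q powr (1-a))"
      using assms by (simp add: powr_mult_base powr_mult mult_ac)
    also have "c powr a * c powr (1-a) = c" using assms by (simp add: powr_add[symmetric])
    finally show ?thesis .
  qed
  thus ?thesis using assms by (auto simp: gf_def ennreal_mult ennreal_mult_top)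
qed

lemma gf_meas:
  fixes p q :: "'d::euclidean_space \<Rightarrow> real"
  assumes "p \<in> borel_measurable lborel" "q \<in> borel_measurable lborel"
  shows "(\<lambda>z. gf a (p z) (q z)) \<in> borel_measurable lborel"
  unfolding gf_def using assms by measurable


lemma alg:
  fixes s1 s2 k1 k2 q N m :: real
  assumes "k1 > 0" "k2 > 0" "q > 0" "m > 0" "N = m + q" "q * k1 = m * k2"
  shows "(s1 + s2) / (k1 + k2) = ((1 - q/N) * (q * s1) + (q/N) * (m * s2)) / (q * k1)"
proof -
  have N: "N > 0" using assms(3,4,5) by simp
  have kk: "k1 + k2 = k1 * N / m" using assms by (simp add: field_simps)
  have l: "(s1 + s2) / (k1 + k2) = m * (s1 + s2) / (k1 * N)"
    unfolding kk using assms(1,3,4) N by (simp add: field_simps)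
  have qm: "1 - q/N = m/N" using N assms(5) by (simp add: field_simps)
  have r: "((1 - q/N) * (q * s1) + (q/N) * (m * s2)) / (q * k1) = m * (s1 + s2) / (k1 * N)"
    unfolding qm using assms(1-4) N by (simp add: field_simps)
  show ?thesis using l r by simp
qed

lemma cd: "finite x0 \<Longrightarrow> u \<subseteq> x0 \<Longrightarrow> card (x0 - u) = card x0 - card u"
  by (metis card_Diff_subset finite_subset)

lemma mech_split:
  assumes finA: "finite A" and c: "c \<notin> x0" and XA: "insert c x0 \<subseteq> A" and q1: "1 \<le> q" and qle: "q \<le> card x0"
  defines "T \<equiv> Sigma {y. y \<subseteq> x0 \<and> card y = q} (\<lambda>y. y)"
  shows "mech_density A q b (insert c x0) z =
     (\<Sum>(y,t)\<in>T. (1 - real q / real (card (insert c x0))) * b y z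
        + real q / real (card (insert c x0)) * b (insert c (y - {t})) z) / real (card T)"
    and "card T > 0"
proof -
  define X where "X = insert c x0"
  define S1 where "S1 = {y. y \<subseteq> x0 \<and> card y = q}"
  define S2 where "S2 = {u. u \<subseteq> x0 \<and> card u = q - 1}"
  define SX where "SX = {y. y \<subseteq> X \<and> card y = q}"
  define T2 where "T2 = Sigma S2 (\<lambda>u. x0 - u)"
  have fin: "finite x0" using finA XA finite_subset by auto
  have finX: "finite X" using fin by (simp add: X_def)
  have cardX: "card X = Suc (card x0)" using fin c by (simp add: X_def)
  have finB: "finite (batches A q)"
    by (rule finite_subset[of _ "Pow A"]) (auto simp: batches_def finA)
  have finS1: "finite S1" by (rule finite_subset[of _ "Pow x0"]) (auto simp: S1_def fin)
  have finS2: "finite S2" by (rule finite_subset[of _ "Pow x0"]) (auto simp: S2_def fin)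
  have finSX: "finite SX" by (rule finite_subset[of _ "Pow X"]) (auto simp: SX_def finX)
  have finT: "finite T" unfolding T_def S1_def[symmetric]
    using finS1 by (auto intro!: finite_SigmaI simp: S1_def intro: finite_subset[OF _ fin])
  have finT2: "finite T2" unfolding T2_def using finS2 fin by auto
  have a: "mech_density A q b X z = (\<Sum>y\<in>SX. b y z) / real (card SX)"
  proof -
    have D: "card X choose q = card SX" unfolding SX_def using n_subsets[OF finX] by simp
    have "mech_density A q b X z = (\<Sum>y\<in>batches A q. if y \<subseteq> X \<and> card y = q then b y z / real (card SX) else 0)"
      unfolding mech_density_def subsample_prob_def D by (intro sum.cong) auto
    also have "\<dots> = (\<Sum>y\<in>{y\<in>batches A q. y \<subseteq> X \<and> card y = q}. b y z / real (card SX))"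
      by (rule sum.inter_filter[symmetric]) (rule finB)
    also have "{y\<in>batches A q. y \<subseteq> X \<and> card y = q} = SX"
      using XA by (auto simp: batches_def SX_def X_def)
    finally show ?thesis by (simp add: sum_divide_distrib)
  qed
  have SXeq: "SX = S1 \<union> insert c ` S2"
  proof (intro equalityI subsetI)
    fix y assume y: "y \<in> SX"
    show "y \<in> S1 \<union> insert c ` S2"
    proof (cases "c \<in> y")
      case True
      have fy: "finite y" using y finX by (auto simp: SX_def intro: finite_subset)
      have "y - {c} \<in> S2" using y True fy by (auto simp: SX_def S2_def X_def)
      moreover have "y = insert c (y - {c})" using True by auto
      ultimately show ?thesis by blast
    next
      case False thus ?thesis using y by (auto simp: SX_def S1_def X_def)
    qed
  next
    fix y assume "y \<in> S1 \<union> insert c ` S2"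
    thus "y \<in> SX"
    proof
      assume "y \<in> S1" thus ?thesis by (auto simp: SX_def S1_def X_def)
    next
      assume "y \<in> insert c ` S2"
      then obtain u where u: "u \<in> S2" "y = insert c u" by auto
      have "finite u" using u fin by (auto simp: S2_def intro: finite_subset)
      moreover have "c \<notin> u" using u c by (auto simp: S2_def)
      ultimately show ?thesis using u q1 by (auto simp: SX_def S2_def X_def)
    qed
  qed
  have disj: "S1 \<inter> insert c ` S2 = {}" using c by (auto simp: S1_def)
  have injc: "inj_on (insert c) S2"
  proof (rule inj_onI)
    fix u v assume uv: "u \<in> S2" "v \<in> S2" "insert c u = insert c v"
    have "c \<notin> u" "c \<notin> v" using uv c by (auto simp: S2_def)
    thus "u = v" using uv(3) by (metis Diff_insert_absorb)
  qed
  have cardSX: "card SX = card S1 + card S2"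
    unfolding SXeq using disj finS1 finS2 injc by (simp add: card_Un_disjoint card_image)
  have sumSX: "(\<Sum>y\<in>SX. b y z) = (\<Sum>y\<in>S1. b y z) + (\<Sum>u\<in>S2. b (insert c u) z)"
    unfolding SXeq using disj finS1 finS2 injc by (simp add: sum.union_disjoint sum.reindex)
  have cardT: "card T = q * card S1"
    unfolding T_def S1_def[symmetric] using finS1 fin
    by (subst card_SigmaI) (auto simp: S1_def intro: finite_subset)
  have sumT1: "(\<Sum>(y,t)\<in>T. b y z) = real q * (\<Sum>y\<in>S1. b y z)"
  proof -
    have "(\<Sum>(y,t)\<in>T. b y z) = (\<Sum>y\<in>S1. \<Sum>t\<in>y. b y z)"
      unfolding T_def S1_def[symmetric]
      by (rule sum.Sigma[symmetric]) (use finS1 fin in \<open>auto simp: S1_def intro: finite_subset\<close>)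
    also have "\<dots> = (\<Sum>y\<in>S1. real q * b y z)" by (intro sum.cong) (auto simp: S1_def)
    finally show ?thesis by (simp add: sum_distrib_left)
  qed
  have bij: "bij_betw (\<lambda>(u,t). (insert t u, t)) T2 T"
  proof (rule bij_betw_byWitness[where f'="\<lambda>(y,t). (y - {t}, t)"])
    show "\<forall>a\<in>T2. (\<lambda>(y,t). (y - {t}, t)) ((\<lambda>(u,t). (insert t u, t)) a) = a"
      by (auto simp: T2_def)
    show "\<forall>a\<in>T. (\<lambda>(u,t). (insert t u, t)) ((\<lambda>(y,t). (y - {t}, t)) a) = a"
      by (auto simp: T_def)
    show "(\<lambda>(u,t). (insert t u, t)) ` T2 \<subseteq> T"
    proof
      fix p assume "p \<in> (\<lambda>(u,t). (insert t u, t)) ` T2"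
      then obtain u t where ut: "u \<in> S2" "t \<in> x0" "t \<notin> u" "p = (insert t u, t)" by (auto simp: T2_def)
      have "finite u" using ut fin by (auto simp: S2_def intro: finite_subset)
      thus "p \<in> T" using ut q1 by (auto simp: T_def S2_def)
    qed
    show "(\<lambda>(y,t). (y - {t}, t)) ` T \<subseteq> T2"
    proof
      fix p assume "p \<in> (\<lambda>(y,t). (y - {t}, t)) ` T"
      then obtain y t where yt: "y \<in> S1" "t \<in> y" "p = (y - {t}, t)" by (auto simp: T_def S1_def)
      have "finite y" using yt fin by (auto simp: S1_def intro: finite_subset)
      thus "p \<in> T2" using yt by (auto simp: T2_def S2_def S1_def)
    qed
  qed
  have cardT2: "card T2 = (card x0 - (q - 1)) * card S2"
  proof -
    have "card T2 = (\<Sum>u\<in>S2. card (x0 - u))"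
      unfolding T2_def using finS2 fin by (subst card_SigmaI) auto
    also have "\<dots> = (\<Sum>u\<in>S2. card x0 - (q - 1))"
      using fin by (intro sum.cong) (auto simp: S2_def cd)
    finally show ?thesis by simp
  qed
  have cardTT2: "card T = card T2" using bij by (simp add: bij_betw_same_card)
  have sumT2: "(\<Sum>(y,t)\<in>T. b (insert c (y - {t})) z) = real (card x0 - (q - 1)) * (\<Sum>u\<in>S2. b (insert c u) z)"
  proof -
    have "(\<Sum>(y,t)\<in>T. b (insert c (y - {t})) z) = (\<Sum>p\<in>T2. (\<lambda>(y,t). b (insert c (y - {t})) z) ((\<lambda>(u,t). (insert t u, t)) p))"
      using sum.reindex_bij_betw[OF bij, of "\<lambda>(y,t). b (insert c (y - {t})) z"] by simp
    also have "\<dots> = (\<Sum>(u,t)\<in>T2. b (insert c u) z)"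
      by (intro sum.cong) (auto simp: T2_def)
    also have "\<dots> = (\<Sum>u\<in>S2. \<Sum>t\<in>x0 - u. b (insert c u) z)"
      unfolding T2_def by (rule sum.Sigma[symmetric]) (use finS2 fin in auto)
    also have "\<dots> = (\<Sum>u\<in>S2. real (card x0 - (q - 1)) * b (insert c u) z)"
      using fin by (intro sum.cong) (auto simp: S2_def cd)
    finally show ?thesis by (simp add: sum_distrib_left)
  qed
  have k2: "card S2 > 0"
  proof -
    obtain u where "u \<subseteq> x0" "card u = q - 1" using obtain_subset_with_card_n[of "q - 1" x0] qle by (metis diff_le_self le_trans)
    hence "S2 \<noteq> {}" by (auto simp: S2_def)
    thus ?thesis using finS2 by (simp add: card_gt_0_iff)
  qed
  have mpos: "card x0 - (q - 1) > 0" using qle q1 by simp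
  have nT: "card T > 0" using cardTT2 cardT2 k2 mpos by simp
  then show "card T > 0" .
  have k1: "card S1 > 0" using nT cardT by simp
  have rel: "real q * real (card S1) = real (card x0 - (q - 1)) * real (card S2)"
    using cardT cardT2 cardTT2 by (metis of_nat_mult)
  have mreal: "real (card x0 - (q - 1)) = real (card x0) + 1 - real q" using qle q1 by (simp add: of_nat_diff)
  show "mech_density A q b (insert c x0) z =
     (\<Sum>(y,t)\<in>T. (1 - real q / real (card (insert c x0))) * b y z
        + real q / real (card (insert c x0)) * b (insert c (y - {t})) z) / real (card T)"
  proof -
    have "(\<Sum>(y,t)\<in>T. (1 - real q / real (card X)) * b y z
        + real q / real (card X) * b (insert c (y - {t})) z)
       = (1 - real q / real (card X)) * (\<Sum>(y,t)\<in>T. b y z) + real q / real (card X) * (\<Sum>(y,t)\<in>T. b (insert c (y - {t})) z)"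
      by (simp add: sum.distrib sum_distrib_left case_prod_unfold)
    also have "\<dots> = (1 - real q / real (card X)) * (real q * (\<Sum>y\<in>S1. b y z))
        + real q / real (card X) * (real (card x0 - (q - 1)) * (\<Sum>u\<in>S2. b (insert c u) z))"
      by (simp only: sumT1 sumT2)
    finally have e: "(\<Sum>(y,t)\<in>T. (1 - real q / real (card X)) * b y z
        + real q / real (card X) * b (insert c (y - {t})) z) = \<dots>" .
    show ?thesis unfolding X_def[symmetric] unfolding e a sumSX cardSX cardT of_nat_add of_nat_mult
      by (rule alg) (use k1 k2 q1 mpos rel mreal cardX in auto)
  qed
qed

lemma d_pm_le2:
  assumes "ins_rem_rel A y1 y2" "ins_rem_rel A y2 y3"
  shows "d_pm A y1 y3 \<le> 2"
proof -
  have "(ins_rem_rel A ^^ 2) y1 y3" using assms by (auto simp: numeral_2_eq_2 relcompp.simps)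
  thus ?thesis unfolding d_pm_def by (rule Least_le)
qed

lemma renyi_gf: "renyi_lambda a p q = (\<integral>\<^sup>+ z. gf a (p z) (q z) \<partial>lborel)"
  by (simp add: renyi_lambda_def gf_def)

theorem mainTheorem12:
  fixes A :: "'a set" and q :: nat and b :: "'a set \<Rightarrow> 'd::euclidean_space \<Rightarrow> real"
    and \<alpha> :: real and x x' :: "'a set"
  assumes "finite A"
    and dens: "\<And>y. y \<in> batches A q \<Longrightarrow> is_density (b y)"
    and "\<alpha> > 1"
    and "x \<subseteq> A" and "card x > q"
    and "subst_rel A x x'"
  shows "renyi_lambda \<alpha> (mech_density A q b x) (mech_density A q b x') \<le>
    (let w = real q / real (card x) in
     Max ((\<lambda>(y11, y12, y21, y22). renyi_lambda \<alpha>
              (\<lambda>z. (1 - w) * b y11 z + w * b y12 z)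
              (\<lambda>z. (1 - w) * b y21 z + w * b y22 z)) `
          {(y11, y12, y21, y22). y11 \<in> batches A q \<and> y12 \<in> batches A q \<and>
             y21 \<in> batches A q \<and> y22 \<in> batches A q \<and> y11 = y21 \<and>
             d_pm A y11 y12 \<le> 2 \<and> d_pm A y11 y22 \<le> 2 \<and> d_pm A y12 y22 \<le> 2}))"
proof -
  note finA = assms(1) and a1 = assms(3) and xA = assms(4) and qx = assms(5)
  obtain a a' where aa: "a \<in> x" "a' \<in> A" "a' \<notin> x" "x' = (x - {a}) \<union> {a'}"
    using assms(6) unfolding subst_rel_def by blast
  define x0 where "x0 = x - {a}"
  define w where "w = real q / real (card x)"
  define C where "C = {(y11, y12, y21, y22). y11 \<in> batches A q \<and> y12 \<in> batches A q \<and>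
             y21 \<in> batches A q \<and> y22 \<in> batches A q \<and> y11 = y21 \<and>
             d_pm A y11 y12 \<le> 2 \<and> d_pm A y11 y22 \<le> 2 \<and> d_pm A y12 y22 \<le> 2}"
  define H where "H = (\<lambda>(y11, y12, y21, y22). renyi_lambda \<alpha>
              (\<lambda>z. (1 - w) * b y11 z + w * b y12 z)
              (\<lambda>z. (1 - w) * b y21 z + w * b y22 z))"
  have finx: "finite x" using finA xA finite_subset by auto
  have x_eq: "x = insert a x0" using aa by (auto simp: x0_def)
  have x'_eq: "x' = insert a' x0" using aa by (auto simp: x0_def)
  have a0: "a \<notin> x0" "a' \<notin> x0" using aa by (auto simp: x0_def)
  have fin0: "finite x0" using finx by (simp add: x0_def)
  have cx: "card x = Suc (card x0)" using x_eq a0 fin0 by simp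
  have cx': "card (insert a' x0) = card x" using cx a0 fin0 by simp
  have cxa: "card (insert a x0) = card x" using x_eq by simp
  have XA: "insert a x0 \<subseteq> A" "insert a' x0 \<subseteq> A" using x_eq xA aa by auto
  have finB: "finite (batches A q)"
    by (rule finite_subset[of _ "Pow A"]) (auto simp: batches_def finA)
  have finC: "finite C"
    by (rule finite_subset[of _ "batches A q \<times> batches A q \<times> batches A q \<times> batches A q"])
       (auto simp: C_def finB)
  have bnn: "\<And>y z. y \<in> batches A q \<Longrightarrow> b y z \<ge> 0" using dens by (auto simp: is_density_def)
  have bm: "\<And>y. y \<in> batches A q \<Longrightarrow> b y \<in> borel_measurable lborel" using dens by (auto simp: is_density_def)
  have goal: "renyi_lambda \<alpha> (mech_density A q b x) (mech_density A q b x') \<le> Max (H ` C)"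
  proof (cases "q = 0")
    case True
    have bq: "batches A q = {{}}" using True finA by (auto simp: batches_def) (metis card_0_eq finite_subset empty_iff)
    have md: "mech_density A q b X = b {}" for X
      by (rule ext) (simp add: mech_density_def bq[unfolded True] subsample_prob_def True)
    have d0: "d_pm A {} {} \<le> 2" unfolding d_pm_def
      by (rule order_trans[OF Least_le[of _ 0]]) auto
    have "({}, {}, {}, {}) \<in> C" using d0 by (simp add: C_def bq)
    hence "H ({}, {}, {}, {}) \<le> Max (H ` C)" using finC by (intro Max_ge) auto
    moreover have "H ({}, {}, {}, {}) = renyi_lambda \<alpha> (b {}) (b {})"
      by (simp add: H_def w_def True)
    ultimately show ?thesis by (simp add: md)
  next
    case False
    hence q1: "1 \<le> q" by simp
    have qle: "q \<le> card x0" using qx cx by simp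
    define T where "T = Sigma {y. y \<subseteq> x0 \<and> card y = q} (\<lambda>y. y)"
    define F where "F = (\<lambda>c (y, t) z. (1 - w) * b y z + w * b (insert c (y - {t})) z)"
    have ms: "mech_density A q b (insert c x0) = (\<lambda>z. (\<Sum>i\<in>T. F c i z) / real (card T))"
      if "c \<notin> x0" "insert c x0 \<subseteq> A" "card (insert c x0) = card x" for c
      using mech_split(1)[OF finA that(1,2) q1 qle, of b] that(3)
      by (auto simp: T_def F_def w_def case_prod_unfold)
    have nT: "card T > 0" using mech_split(2)[OF finA a0(1) XA(1) q1 qle] by (simp add: T_def)
    have finT: "finite T" using nT card_gt_0_iff by blast
    define n where "n = card T"
    have w01: "0 \<le> w" "w \<le> 1" using qx by (auto simp: w_def)
    have memT: "y \<in> batches A q" "insert c (y - {t}) \<in> batches A q" "t \<in> y"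
      "ins_rem_rel A y (y - {t})" "ins_rem_rel A (y - {t}) (insert c (y - {t}))"
      "ins_rem_rel A (insert c (y - {t})) (y - {t})"
      if "(y, t) \<in> T" "c \<notin> x0" "insert c x0 \<subseteq> A" for y t c
    proof -
      have y: "y \<subseteq> x0" "card y = q" "t \<in> y" using that by (auto simp: T_def)
      have fy: "finite y" using y fin0 finite_subset by auto
      have cn: "c \<notin> y - {t}" using y that by auto
      show "y \<in> batches A q" using y that by (auto simp: batches_def)
      show "insert c (y - {t}) \<in> batches A q" using y that fy cn q1
        by (auto simp: batches_def card_insert_if)
      show "t \<in> y" by (rule y(3))
      show "ins_rem_rel A y (y - {t})" using y that unfolding ins_rem_rel_def by blast
      show "ins_rem_rel A (y - {t}) (insert c (y - {t}))" using y that cn unfolding ins_rem_rel_def by blast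
      have "insert c (y - {t}) - {c} = y - {t}" using cn by auto
      thus "ins_rem_rel A (insert c (y - {t})) (y - {t})" using y that cn unfolding ins_rem_rel_def by blast
    qed
    have Fnn: "F c i z \<ge> 0" if "i \<in> T" "c \<notin> x0" "insert c x0 \<subseteq> A" for i c z
      using that memT[of "fst i" "snd i" c] w01 bnn by (auto simp: F_def case_prod_unfold)
    have Fm: "F c i \<in> borel_measurable lborel" if "i \<in> T" "c \<notin> x0" "insert c x0 \<subseteq> A" for i c
    proof -
      obtain y t where i: "i = (y, t)" by (cases i)
      have "b y \<in> borel_measurable lborel" "b (insert c (y - {t})) \<in> borel_measurable lborel"
        using memT[of y t c] that i bm by auto
      thus ?thesis unfolding F_def i by simp
    qed
    have HC: "renyi_lambda \<alpha> (F a i) (F a' i) \<le> Max (H ` C)" if "i \<in> T" for i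
    proof -
      obtain y t where i: "i = (y, t)" by (cases i)
      have m1: "(y, insert a (y - {t}), y, insert a' (y - {t})) \<in> C"
      proof -
        note A1 = memT[of y t a] and A2 = memT[of y t a']
        have "a \<noteq> a'" using aa by auto
        have r: "ins_rem_rel A (y - {t}) (insert a' (y - {t}))" using A2 that i a0 XA by auto
        show ?thesis unfolding C_def using A1 A2 that i a0 XA
          by (auto intro!: d_pm_le2 r)
      qed
      have "H (y, insert a (y - {t}), y, insert a' (y - {t})) \<le> Max (H ` C)"
        using finC m1 by (intro Max_ge) auto
      moreover have "H (y, insert a (y - {t}), y, insert a' (y - {t})) = renyi_lambda \<alpha> (F a i) (F a' i)"
        by (simp add: H_def F_def i)
      ultimately show ?thesis by simp
    qed
    have pw: "gf \<alpha> (mech_density A q b x z) (mech_density A q b x' z)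
        \<le> (\<Sum>i\<in>T. ennreal (1 / real n) * gf \<alpha> (F a i z) (F a' i z))" for z
    proof -
      have "gf \<alpha> (mech_density A q b x z) (mech_density A q b x' z)
          = gf \<alpha> (\<Sum>i\<in>T. F a i z / real n) (\<Sum>i\<in>T. F a' i z / real n)"
        unfolding x_eq x'_eq ms[OF a0(1) XA(1) cxa] ms[OF a0(2) XA(2) cx']
        by (simp add: sum_divide_distrib n_def)
      also have "\<dots> \<le> (\<Sum>i\<in>T. gf \<alpha> (F a i z / real n) (F a' i z / real n))"
        using Fnn a0 XA by (intro gf_sub a1 finT) auto
      also have "\<dots> = (\<Sum>i\<in>T. ennreal (1 / real n) * gf \<alpha> (F a i z) (F a' i z))"
        using nT gf_hom[of "1 / real n" \<alpha>] by (simp add: n_def)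
      finally show ?thesis .
    qed
    have "renyi_lambda \<alpha> (mech_density A q b x) (mech_density A q b x')
        \<le> (\<integral>\<^sup>+ z. (\<Sum>i\<in>T. ennreal (1 / real n) * gf \<alpha> (F a i z) (F a' i z)) \<partial>lborel)"
      unfolding renyi_gf by (intro nn_integral_mono pw)
    also have "\<dots> = (\<Sum>i\<in>T. ennreal (1 / real n) * renyi_lambda \<alpha> (F a i) (F a' i))"
    proof -
      have gm: "(\<lambda>z. gf \<alpha> (F a i z) (F a' i z)) \<in> borel_measurable lborel" if "i \<in> T" for i
        using Fm[OF that a0(1) XA(1)] Fm[OF that a0(2) XA(2)] by (rule gf_meas)
      have "(\<integral>\<^sup>+ z. (\<Sum>i\<in>T. ennreal (1 / real n) * gf \<alpha> (F a i z) (F a' i z)) \<partial>lborel)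
          = (\<Sum>i\<in>T. \<integral>\<^sup>+ z. ennreal (1 / real n) * gf \<alpha> (F a i z) (F a' i z) \<partial>lborel)"
        by (rule nn_integral_sum) (use gm in measurable)
      also have "\<dots> = (\<Sum>i\<in>T. ennreal (1 / real n) * renyi_lambda \<alpha> (F a i) (F a' i))"
        unfolding renyi_gf by (intro sum.cong refl nn_integral_cmult gm)
      finally show ?thesis .
    qed
    also have "\<dots> \<le> (\<Sum>i\<in>T. ennreal (1 / real n) * Max (H ` C))"
      using HC by (intro sum_mono mult_left_mono) auto
    also have "\<dots> = ennreal (real n) * ennreal (1 / real n) * Max (H ` C)"
      by (simp add: n_def ennreal_of_nat_eq_real_of_nat mult.assoc)
    also have "ennreal (real n) * ennreal (1 / real n) = 1"
      using nT by (simp add: ennreal_mult[symmetric] n_def)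
    finally show ?thesis by simp
  qed
  thus ?thesis unfolding Let_def w_def[symmetric] H_def[symmetric] C_def[symmetric] .
qed

end
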